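(* Let $M\subset\mathbf{R}^{n+1}$ be a smooth closed connected mean convex hypersurface and let $u$ be the arrival time of the mean curvature flow starting from $M$, and assume $u$ is $C^2$. Suppose that $\nabla u(0)=0$ and $\mathrm{Hess}_u(0)$ has kernel $K$. Then there exists $\epsilon>0$ such that $B_{\epsilon}\cap\mathcal{S}$ is the graph of a $C^1$ map $$f:\Omega\subset K\to K^{\perp},$$ where $\Omega$ is a connected open subset of $K$ containing $0$. Furthermore, $u$ is constant on $B_{\epsilon}\cap\mathcal{S}$.
   Context: Mean convex means the mean curvature is non-negative. The arrival time $u$ is defined on the compact domain bounded by $M$: $u(x)$ is the time at which the front passes through $x$; equivalently $u$ is the Lipschitz viscosity solution of $-1=|\nabla u|\,\mathrm{div}(\nabla u/|\nabla u|)$ with $u=0$ on $M$. The singular set is $\mathcal{S}=\{x:\nabla u(x)=0\}$. $B_\epsilon$ denotes the ball of radius $\epsilon$ centered at $0$. *)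

theory Defs
  imports "HOL-Analysis.Analysis"
begin

text \<open>Points of R^(n+1) are vectors of type real^'n (CARD('n) = n+1).\<close>

text \<open>P is (for a list of coordinate indices) is the iterated partial
  derivative; P (i # is) is the partial derivative in direction e_i of P is.\<close>
definition Ck_on :: "nat \<Rightarrow> (real^'n) set \<Rightarrow> (real^'n \<Rightarrow> real) \<Rightarrow> bool" where
  "Ck_on k S f \<longleftrightarrow>
     (\<exists>P :: 'n list \<Rightarrow> real^'n \<Rightarrow> real.
        (\<forall>x\<in>S. P [] x = f x) \<and>
        (\<forall>is i x. length is < k \<and> x \<in> S \<longrightarrow>
            ((\<lambda>t. P is (x + t *\<^sub>R axis i 1)) has_real_derivative P (i # is) x) (at 0)) \<and>
        (\<forall>is. length is \<le> k \<longrightarrow> continuous_on S (P is)))"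

definition smooth_on :: "(real^'n) set \<Rightarrow> (real^'n \<Rightarrow> real) \<Rightarrow> bool" where
  "smooth_on S f \<longleftrightarrow> (\<forall>k. Ck_on k S f)"

definition grad :: "(real^'n \<Rightarrow> real) \<Rightarrow> real^'n \<Rightarrow> real^'n" where
  "grad f x = (THE v. (f has_derivative (\<lambda>h. v \<bullet> h)) (at x))"

definition hess :: "(real^'n \<Rightarrow> real) \<Rightarrow> real^'n \<Rightarrow> real^'n^'n" where
  "hess f x = (THE A. (grad f has_derivative (\<lambda>h. A *v h)) (at x))"

text \<open>Mean curvature of the level set {g = g x} at x, w.r.t. the normal grad g/|grad g|:
  H = div(grad g / |grad g|).  For g = |x|^2 - 1 this gives n on the unit sphere.\<close>
definition levelset_mean_curv :: "(real^'n \<Rightarrow> real) \<Rightarrow> real^'n \<Rightarrow> real" where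
  "levelset_mean_curv g x =
     (trace (hess g x) - (grad g x \<bullet> (hess g x *v grad g x)) / (norm (grad g x))\<^sup>2)
     / norm (grad g x)"

text \<open>M is a smooth closed connected mean convex hypersurface in R^(n+1), bounding the
  compact domain D: M = {g = 0} is a regular level set of a smooth function g,
  D = {g \<le> 0} is compact, M is connected, and H \<ge> 0 on M (H w.r.t. the inward normal).\<close>
definition mean_convex_hypersurface ::
    "(real^'n) set \<Rightarrow> (real^'n) set \<Rightarrow> bool" where
  "mean_convex_hypersurface M D \<longleftrightarrow>
     (\<exists>g. smooth_on UNIV g \<and> M = {x. g x = 0} \<and> D = {x. g x \<le> 0} \<and>
          M \<noteq> {} \<and> compact D \<and> connected M \<and>
          (\<forall>x\<in>M. grad g x \<noteq> 0) \<and> (\<forall>x\<in>M. levelset_mean_curv g x \<ge> 0))"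

text \<open>Viscosity solution (Evans-Spruck / Chen-Giga-Goto) of the level set flow equation
  -1 = |Du| div(Du/|Du|) in the interior of D, i.e. F(Du, D^2u) = 0 with
  F(p,X) = -tr((I - p p^T/|p|^2) X) - 1, using the semicontinuous envelopes at p = 0.\<close>
definition viscosity_subsol :: "(real^'n) set \<Rightarrow> (real^'n \<Rightarrow> real) \<Rightarrow> bool" where
  "viscosity_subsol U u \<longleftrightarrow>
     (\<forall>\<phi> x0 r. x0 \<in> U \<and> r > 0 \<and> ball x0 r \<subseteq> U \<and> Ck_on 2 (ball x0 r) \<phi> \<and>
        (\<forall>y\<in>ball x0 r. u y - \<phi> y \<le> u x0 - \<phi> x0) \<longrightarrow>
        (let p = grad \<phi> x0; X = hess \<phi> x0 in
          (p \<noteq> 0 \<longrightarrow> trace X - (p \<bullet> (X *v p)) / (norm p)\<^sup>2 + 1 \<ge> 0) \<and>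
          (p = 0 \<longrightarrow> (\<exists>e. norm e = 1 \<and> trace X - e \<bullet> (X *v e) + 1 \<ge> 0))))"

definition viscosity_supersol :: "(real^'n) set \<Rightarrow> (real^'n \<Rightarrow> real) \<Rightarrow> bool" where
  "viscosity_supersol U u \<longleftrightarrow>
     (\<forall>\<phi> x0 r. x0 \<in> U \<and> r > 0 \<and> ball x0 r \<subseteq> U \<and> Ck_on 2 (ball x0 r) \<phi> \<and>
        (\<forall>y\<in>ball x0 r. u y - \<phi> y \<ge> u x0 - \<phi> x0) \<longrightarrow>
        (let p = grad \<phi> x0; X = hess \<phi> x0 in
          (p \<noteq> 0 \<longrightarrow> trace X - (p \<bullet> (X *v p)) / (norm p)\<^sup>2 + 1 \<le> 0) \<and>
          (p = 0 \<longrightarrow> (\<exists>e. norm e = 1 \<and> trace X - e \<bullet> (X *v e) + 1 \<le> 0))))"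

text \<open>u is the arrival time of the MCF starting from M = frontier of the compact domain D:
  the Lipschitz viscosity solution on D with u = 0 on M.\<close>
definition arrival_time ::
    "(real^'n) set \<Rightarrow> (real^'n) set \<Rightarrow> (real^'n \<Rightarrow> real) \<Rightarrow> bool" where
  "arrival_time M D u \<longleftrightarrow>
     (\<exists>L. lipschitz_on L D u) \<and> (\<forall>x\<in>M. u x = 0) \<and>
     viscosity_subsol (interior D) u \<and> viscosity_supersol (interior D) u"

definition singular_set :: "(real^'n) set \<Rightarrow> (real^'n \<Rightarrow> real) \<Rightarrow> (real^'n) set" where
  "singular_set D u = {x \<in> interior D. grad u x = 0}"

definition C1_on :: "(real^'n) set \<Rightarrow> (real^'n \<Rightarrow> real^'n) \<Rightarrow> bool" where
  "C1_on \<Omega> f \<longleftrightarrow>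
     (\<exists>f' :: real^'n \<Rightarrow> ((real^'n) \<Rightarrow>\<^sub>L (real^'n)).
        (\<forall>x\<in>\<Omega>. (f has_derivative blinfun_apply (f' x)) (at x within \<Omega>)) \<and>
        continuous_on \<Omega> f')"

end

theory Submission
  imports Defs
begin

lemma deriv_bound_1d:
  fixes \<phi> :: "real \<Rightarrow> real"
  assumes d: "\<And>t. \<bar>t\<bar> \<le> \<bar>s\<bar> \<Longrightarrow> (\<phi> has_real_derivative \<phi>' t) (at t)"
    and b: "\<And>t. \<bar>t\<bar> \<le> \<bar>s\<bar> \<Longrightarrow> \<bar>\<phi>' t\<bar> \<le> e"
  shows "\<bar>\<phi> s - \<phi> 0\<bar> \<le> e * \<bar>s\<bar>"
proof (cases "s = 0")
  case True then show ?thesis by simp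
next
  case False
  show ?thesis
  proof (cases "s > 0")
    case True
    obtain z where z: "0 < z" "z < s" "\<phi> s - \<phi> 0 = (s - 0) * \<phi>' z"
      using MVT2[of 0 s \<phi> \<phi>'] True d by auto
    have "\<bar>\<phi>' z\<bar> \<le> e" using b z by auto
    then show ?thesis using z True by (simp add: abs_mult mult.commute mult_left_mono)
  next
    case False
    with \<open>s \<noteq> 0\<close> have s: "s < 0" by auto
    obtain z where z: "s < z" "z < 0" "\<phi> 0 - \<phi> s = (0 - s) * \<phi>' z"
      using MVT2[of s 0 \<phi> \<phi>'] s d by auto
    have "\<bar>\<phi>' z\<bar> \<le> e" using b z by auto
    then have "\<bar>\<phi> 0 - \<phi> s\<bar> \<le> e * \<bar>s\<bar>" using z s by (simp add: abs_mult mult.commute mult_left_mono)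
    then show ?thesis by simp
  qed
qed

lemma partial_shift:
  fixes F :: "real^'n \<Rightarrow> real"
  assumes "((\<lambda>\<tau>. F ((y + t *\<^sub>R v) + \<tau> *\<^sub>R v)) has_real_derivative D) (at 0)"
  shows "((\<lambda>\<tau>. F (y + \<tau> *\<^sub>R v)) has_real_derivative D) (at t)"
proof -
  have "((\<lambda>\<tau>. F (y + (\<tau> + t) *\<^sub>R v)) has_real_derivative D) (at 0)"
    using assms by (simp add: algebra_simps)
  then show ?thesis using DERIV_shift[of "\<lambda>\<tau>. F (y + \<tau> *\<^sub>R v)" D 0 t] by simp
qed

lemma partial_sum_nth:
  fixes h :: "real^'n"
  shows "(\<Sum>i\<in>A. h$i *\<^sub>R axis i (1::real)) $ k = (if k \<in> A then h$k else 0)"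
proof -
  have "(\<Sum>i\<in>A. h$i *\<^sub>R axis i (1::real)) $ k = (\<Sum>i\<in>A. h$i * (axis i 1 $ k))"
    by (simp add: sum_component)
  also have "\<dots> = (\<Sum>i\<in>A. if i = k then h$k else 0)"
    by (rule sum.cong) (auto simp: axis_def)
  also have "\<dots> = (if k \<in> A then h$k else 0)"
    by (simp add: sum.delta')
  finally show ?thesis .
qed

lemma cp_deriv:
  fixes F :: "real^'n \<Rightarrow> real" and G :: "'n \<Rightarrow> real^'n \<Rightarrow> real"
  assumes U: "open U" and x: "x \<in> U"
    and d: "\<And>y i. y \<in> U \<Longrightarrow> ((\<lambda>t. F (y + t *\<^sub>R axis i 1)) has_real_derivative G i y) (at 0)"
    and c: "\<And>i. continuous_on U (G i)"
  shows "(F has_derivative (\<lambda>h. (\<chi> i. G i x) \<bullet> h)) (at x)"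
  unfolding has_derivative_at_alt
proof (intro conjI allI impI)
  show "bounded_linear (\<lambda>h. (\<chi> i. G i x) \<bullet> h)" by (rule bounded_linear_inner_right)
  fix e :: real assume e: "e > 0"
  define e' where "e' = e / real CARD('n)"
  have e': "e' > 0" using e by (simp add: e'_def)
  have cv: "continuous_on U (\<lambda>y. \<chi> i. G i y)" by (intro continuous_on_vec_lambda c)
  obtain d1 where d1: "d1 > 0" "\<And>y. y \<in> U \<Longrightarrow> dist y x < d1 \<Longrightarrow> dist (\<chi> i. G i y) (\<chi> i. G i x) < e'"
    using cv x e' unfolding continuous_on_iff by metis
  obtain d2 where d2: "d2 > 0" "ball x d2 \<subseteq> U" using U x open_contains_ball by blast
  define \<delta> where "\<delta> = min d1 d2"
  have \<delta>: "\<delta> > 0" using d1 d2 by (simp add: \<delta>_def)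
  have Gb: "\<bar>G i y - G i x\<bar> \<le> e'" if "dist y x < \<delta>" for i y
  proof -
    have "y \<in> U" using that d2 by (auto simp: \<delta>_def dist_commute)
    then have "dist (\<chi> i. G i y) (\<chi> i. G i x) < e'" using d1 that by (simp add: \<delta>_def)
    then have "norm ((\<chi> i. G i y) - (\<chi> i. G i x)) < e'" by (simp add: dist_norm)
    moreover have "\<bar>((\<chi> i. G i y) - (\<chi> i. G i x)) $ i\<bar> \<le> norm ((\<chi> i. G i y) - (\<chi> i. G i x))"
      by (rule component_le_norm_cart)
    ultimately show ?thesis by simp
  qed
  show "\<exists>d>0. \<forall>y. norm (y - x) < d \<longrightarrow>
          norm (F y - F x - (\<chi> i. G i x) \<bullet> (y - x)) \<le> e * norm (y - x)"
  proof (intro exI conjI allI impI)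
    show "\<delta> > 0" by (rule \<delta>)
    fix y assume y: "norm (y - x) < \<delta>"
    define h where "h = y - x"
    have hn: "norm h < \<delta>" using y by (simp add: h_def)
    let ?hA = "\<lambda>A. (\<Sum>i\<in>A. h$i *\<^sub>R axis i (1::real))"
    have hAle: "norm (?hA A + t *\<^sub>R axis j 1) \<le> norm h" if "j \<notin> A" "\<bar>t\<bar> \<le> \<bar>h$j\<bar>" for A j t
    proof (rule norm_le_componentwise_cart)
      fix k
      show "norm ((?hA A + t *\<^sub>R axis j 1) $ k) \<le> norm (h $ k)"
      proof -
        have "(?hA A + t *\<^sub>R axis j 1) $ k = (if k \<in> A then h$k else 0) + t * (axis j 1 $ k)"
          by (simp only: vector_add_component partial_sum_nth) simp
        then show ?thesis using that by (auto simp: axis_def)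
      qed
    qed
    have main: "\<bar>F (x + ?hA A) - F x - (\<Sum>i\<in>A. h$i * G i x)\<bar> \<le> real (card A) * e' * norm h"
      if "finite A" for A
      using that
    proof (induction A rule: finite_induct)
      case empty then show ?case by simp
    next
      case (insert j A)
      define z where "z = x + ?hA A"
      define s where "s = h$j"
      have eq: "x + ?hA (insert j A) = z + s *\<^sub>R axis j 1"
        using insert by (simp add: z_def s_def algebra_simps)
      have pt: "dist (z + t *\<^sub>R axis j 1) x < \<delta>" if "\<bar>t\<bar> \<le> \<bar>s\<bar>" for t
      proof -
        have "dist (z + t *\<^sub>R axis j 1) x = norm (?hA A + t *\<^sub>R axis j 1)"
          by (simp add: z_def dist_norm)
        also have "\<dots> \<le> norm h" using hAle insert that by (simp add: s_def)
        finally show ?thesis using hn by simp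
      qed
      have inU: "z + t *\<^sub>R axis j 1 \<in> U" if "\<bar>t\<bar> \<le> \<bar>s\<bar>" for t
        using pt[OF that] d2 by (auto simp: \<delta>_def dist_commute)
      have one: "\<bar>(F (z + s *\<^sub>R axis j 1) - s * G j x) - (F (z + 0 *\<^sub>R axis j 1) - 0 * G j x)\<bar> \<le> e' * \<bar>s\<bar>"
      proof (rule deriv_bound_1d[where \<phi>' = "\<lambda>t. G j (z + t *\<^sub>R axis j 1) - G j x"])
        fix t assume t: "\<bar>t\<bar> \<le> \<bar>s\<bar>"
        have "((\<lambda>\<tau>. F ((z + t *\<^sub>R axis j 1) + \<tau> *\<^sub>R axis j 1)) has_real_derivative G j (z + t *\<^sub>R axis j 1)) (at 0)"
          using d[OF inU[OF t]] .
        then have "((\<lambda>\<tau>. F (z + \<tau> *\<^sub>R axis j 1)) has_real_derivative G j (z + t *\<^sub>R axis j 1)) (at t)"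
          by (rule partial_shift)
        then show "((\<lambda>t. F (z + t *\<^sub>R axis j 1) - t * G j x) has_real_derivative G j (z + t *\<^sub>R axis j 1) - G j x) (at t)"
          by (auto intro!: derivative_eq_intros)
        show "\<bar>G j (z + t *\<^sub>R axis j 1) - G j x\<bar> \<le> e'" using Gb pt[OF t] by blast
      qed
      have sh: "\<bar>s\<bar> \<le> norm h" unfolding s_def by (rule component_le_norm_cart)
      have e1: "F (x + ?hA (insert j A)) = F (z + s *\<^sub>R axis j 1)" using eq by simp
      have e2: "(\<Sum>i\<in>insert j A. h$i * G i x) = s * G j x + (\<Sum>i\<in>A. h$i * G i x)"
        using insert by (simp add: s_def)
      have "\<bar>F (x + ?hA (insert j A)) - F x - (\<Sum>i\<in>insert j A. h$i * G i x)\<bar>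
          = \<bar>((F (z + s *\<^sub>R axis j 1) - s * G j x) - (F (z + 0 *\<^sub>R axis j 1) - 0 * G j x))
             + (F (x + ?hA A) - F x - (\<Sum>i\<in>A. h$i * G i x))\<bar>"
        unfolding e1 e2 by (simp add: z_def)
      also have "\<dots> \<le> e' * \<bar>s\<bar> + real (card A) * e' * norm h"
        using one insert.IH by linarith
      also have "\<dots> \<le> e' * norm h + real (card A) * e' * norm h"
        using sh e' by (simp add: mult_left_mono)
      also have "\<dots> = real (card (insert j A)) * e' * norm h"
        using insert by (simp add: algebra_simps)
      finally show ?case .
    qed
    have hU: "?hA UNIV = h"
      using basis_expansion[of h] by (simp add: scalar_mult_eq_scaleR)
    have lin: "(\<Sum>i\<in>UNIV. h$i * G i x) = (\<chi> i. G i x) \<bullet> h"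
      by (simp add: inner_vec_def mult.commute)
    have "\<bar>F (x + h) - F x - (\<chi> i. G i x) \<bullet> h\<bar> \<le> real CARD('n) * e' * norm h"
      using main[of UNIV] hU lin by simp
    also have "\<dots> = e * norm h" by (simp add: e'_def)
    finally show "norm (F y - F x - (\<chi> i. G i x) \<bullet> (y - x)) \<le> e * norm (y - x)"
      by (simp add: h_def)
  qed
qed

lemma has_derivative_vec_comp:
  fixes f :: "real^'n \<Rightarrow> real^'m"
  assumes "\<And>i. ((\<lambda>x. f x $ i) has_derivative (\<lambda>h. f' h $ i)) (at a)"
  shows "(f has_derivative f') (at a)"
proof -
  have "\<forall>b\<in>Basis. ((\<lambda>x. f x \<bullet> b) has_derivative (\<lambda>x. f' x \<bullet> b)) (at a within UNIV)"
  proof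
    fix b :: "real^'m" assume "b \<in> Basis"
    then obtain i where b: "b = axis i 1" unfolding Basis_vec_def by auto
    show "((\<lambda>x. f x \<bullet> b) has_derivative (\<lambda>x. f' x \<bullet> b)) (at a within UNIV)"
      using assms[of i] by (simp add: b inner_axis)
  qed
  then show ?thesis using has_derivative_componentwise_within[of f f' a UNIV] by simp
qed

lemma grad_eqI:
  assumes "(f has_derivative (\<lambda>h. v \<bullet> h)) (at x)"
  shows "grad f x = v"
  unfolding grad_def
proof (rule the_equality)
  show "(f has_derivative (\<lambda>h. v \<bullet> h)) (at x)" by fact
  fix w assume "(f has_derivative (\<lambda>h. w \<bullet> h)) (at x)"
  then have "(\<lambda>h. w \<bullet> h) = (\<lambda>h. v \<bullet> h)" using assms has_derivative_unique by blast
  then have "w \<bullet> (w - v) = v \<bullet> (w - v)" by metis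
  then have "(w - v) \<bullet> (w - v) = 0" by (simp add: inner_diff_left)
  then show "w = v" by simp
qed

lemma hess_eqI:
  assumes "(grad f has_derivative (\<lambda>h. A *v h)) (at x)"
  shows "hess f x = A"
  unfolding hess_def
proof (rule the_equality)
  show "(grad f has_derivative (\<lambda>h. A *v h)) (at x)" by fact
  fix B assume "(grad f has_derivative (\<lambda>h. B *v h)) (at x)"
  then have "(\<lambda>h. B *v h) = (\<lambda>h. A *v h)" using assms has_derivative_unique by blast
  then show "B = A" by (metis matrix_eq)
qed

locale C2loc =
  fixes U :: "(real^'n) set" and u :: "real^'n \<Rightarrow> real" and P :: "'n list \<Rightarrow> real^'n \<Rightarrow> real"
  assumes U: "open U"
    and P0: "\<And>x. x \<in> U \<Longrightarrow> P [] x = u x"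
    and Pd: "\<And>is i x. length is < 2 \<Longrightarrow> x \<in> U \<Longrightarrow>
            ((\<lambda>t. P is (x + t *\<^sub>R axis i 1)) has_real_derivative P (i # is) x) (at 0)"
    and Pc: "\<And>is. length is \<le> 2 \<Longrightarrow> continuous_on U (P is)"
begin

definition gv where "gv x = (\<chi> i. P [i] x)"
definition Hm where "Hm x = (\<chi> i j. P [j, i] x)"

lemma u_deriv: "x \<in> U \<Longrightarrow> (u has_derivative (\<lambda>h. gv x \<bullet> h)) (at x)"
proof -
  assume x: "x \<in> U"
  have "(P [] has_derivative (\<lambda>h. (\<chi> i. P [i] x) \<bullet> h)) (at x)"
    by (rule cp_deriv[OF U x]) (auto intro: Pd Pc)
  then show ?thesis unfolding gv_def
    by (rule has_derivative_transform_within_open[OF _ U x]) (simp add: P0)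
qed

lemma grad_eq: "x \<in> U \<Longrightarrow> grad u x = gv x"
  using u_deriv grad_eqI by blast

lemma gv_deriv: "x \<in> U \<Longrightarrow> (gv has_derivative (\<lambda>h. Hm x *v h)) (at x)"
proof -
  assume x: "x \<in> U"
  show ?thesis
  proof (rule has_derivative_vec_comp)
    fix i
    have "(P [i] has_derivative (\<lambda>h. (\<chi> j. P [j, i] x) \<bullet> h)) (at x)"
      by (rule cp_deriv[OF U x]) (auto intro: Pd Pc)
    moreover have "(\<chi> j. P [j, i] x) \<bullet> h = (Hm x *v h) $ i" for h
      by (simp add: Hm_def matrix_vector_mult_def inner_vec_def mult.commute)
    ultimately show "((\<lambda>x. gv x $ i) has_derivative (\<lambda>h. (Hm x *v h) $ i)) (at x)"
      by (simp add: gv_def)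
  qed
qed

lemma grad_deriv: "x \<in> U \<Longrightarrow> (grad u has_derivative (\<lambda>h. Hm x *v h)) (at x)"
  using gv_deriv by (rule has_derivative_transform_within_open[OF _ U]) (auto simp: grad_eq)

lemma hess_eq: "x \<in> U \<Longrightarrow> hess u x = Hm x"
  using grad_deriv hess_eqI by blast

lemma Hm_cont: "continuous_on U Hm"
  unfolding Hm_def by (intro continuous_on_vec_lambda Pc) auto

lemma gv_cont: "continuous_on U gv"
  unfolding gv_def by (intro continuous_on_vec_lambda Pc) auto

end

lemma C2locI:
  assumes "Ck_on 2 U u" "open U"
  obtains P where "C2loc U u P"
  using assms unfolding Ck_on_def C2loc_def by blast

lemma mv_axis: "((H::real^'n^'n) *v (t *\<^sub>R axis j 1)) $ i = t * H $ i $ j"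
proof -
  have "((H::real^'n^'n) *v (t *\<^sub>R axis j 1)) $ i = (\<Sum>k\<in>UNIV. H$i$k * (t *\<^sub>R axis j 1) $ k)"
    by (simp add: matrix_vector_mult_def)
  also have "\<dots> = (\<Sum>k\<in>UNIV. if k = j then t * H $ i $ j else 0)"
    by (rule sum.cong) (auto simp: axis_def)
  finally show ?thesis by simp
qed

context C2loc begin

lemma u_line: "c + s *\<^sub>R v \<in> U \<Longrightarrow> ((\<lambda>s. u (c + s *\<^sub>R v)) has_real_derivative (gv (c + s *\<^sub>R v) \<bullet> v)) (at s)"
proof -
  assume y: "c + s *\<^sub>R v \<in> U"
  have l: "((\<lambda>s. c + s *\<^sub>R v) has_derivative (\<lambda>r. r *\<^sub>R v)) (at s)"
    by (auto intro!: derivative_eq_intros)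
  have "((\<lambda>s. u (c + s *\<^sub>R v)) has_derivative (\<lambda>r. gv (c + s *\<^sub>R v) \<bullet> (r *\<^sub>R v))) (at s)"
    using has_derivative_compose[OF l u_deriv[OF y]] by simp
  moreover have "(\<lambda>r. gv (c + s *\<^sub>R v) \<bullet> (r *\<^sub>R v)) = (*) (gv (c + s *\<^sub>R v) \<bullet> v)"
    by (auto simp: fun_eq_iff)
  ultimately show ?thesis unfolding has_field_derivative_def by simp
qed

lemma sym_one_side:
  fixes a :: "real^'n" and \<epsilon> \<delta> t :: real
  assumes a: "a \<in> U" and \<delta>: "ball a \<delta> \<subseteq> U"
    and b: "\<And>y. y \<in> ball a \<delta> \<Longrightarrow> norm (gv y - gv a - Hm a *v (y - a)) \<le> \<epsilon> * norm (y - a)"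
    and t: "0 < t" "2 * t < \<delta>"
  shows "\<bar>(u (a + t *\<^sub>R axis j 1 + t *\<^sub>R axis i 1) - u (a + t *\<^sub>R axis i 1))
            - (u (a + t *\<^sub>R axis j 1) - u a) - t * t * Hm a $ i $ j\<bar> \<le> (4 * \<epsilon> * t) * t"
proof -
  define H where "H = Hm a"
  define c1 where "c1 = a + t *\<^sub>R axis j 1"
  let ?\<phi> = "\<lambda>s. u (c1 + s *\<^sub>R axis i 1) - u (a + s *\<^sub>R axis i 1) - s * (t * H $ i $ j)"
  have nrm: "norm (r *\<^sub>R axis i 1 + q *\<^sub>R axis j (1::real)) \<le> \<bar>r\<bar> + \<bar>q\<bar>" for r q
    by (rule order_trans[OF norm_triangle_ineq]) (simp add: norm_axis_1)
  have e0: "\<epsilon> \<ge> 0"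
  proof -
    have "a + (\<delta>/2) *\<^sub>R axis i 1 \<in> ball a \<delta>" using t by (simp add: dist_norm norm_axis_1)
    from b[OF this] have "norm (gv (a + (\<delta>/2) *\<^sub>R axis i 1) - gv a - Hm a *v (a + (\<delta>/2) *\<^sub>R axis i 1 - a))
       \<le> \<epsilon> * norm (a + (\<delta>/2) *\<^sub>R axis i 1 - a)" .
    then have "0 \<le> \<epsilon> * norm (a + (\<delta>/2) *\<^sub>R axis i 1 - a)"
      by (rule order_trans[OF norm_ge_zero])
    then have A: "0 \<le> \<epsilon> * (\<delta>/2)" using t by simp
    show ?thesis
    proof (rule ccontr)
      assume "\<not> \<epsilon> \<ge> 0"
      then have "\<epsilon> * (\<delta>/2) < 0" using t by (simp add: mult_neg_pos)
      then show False using A by simp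
    qed
  qed
  have "\<bar>?\<phi> t - ?\<phi> 0\<bar> \<le> (4 * \<epsilon> * t) * \<bar>t\<bar>"
  proof (rule deriv_bound_1d[where \<phi>' = "\<lambda>s. gv (c1 + s *\<^sub>R axis i 1) $ i - gv (a + s *\<^sub>R axis i 1) $ i - t * H $ i $ j"])
    fix s assume s: "\<bar>s\<bar> \<le> \<bar>t\<bar>"
    have y1b: "c1 + s *\<^sub>R axis i 1 \<in> ball a \<delta>"
    proof -
      have "norm (s *\<^sub>R axis i 1 + t *\<^sub>R axis j (1::real)) \<le> \<bar>s\<bar> + \<bar>t\<bar>" by (rule nrm)
      moreover have "dist a (c1 + s *\<^sub>R axis i 1) = norm (s *\<^sub>R axis i 1 + t *\<^sub>R axis j (1::real))"
        by (simp add: c1_def dist_norm norm_minus_commute algebra_simps)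
      ultimately show ?thesis using s t by simp
    qed
    have y2b: "a + s *\<^sub>R axis i 1 \<in> ball a \<delta>"
      using s t by (simp add: dist_norm norm_axis_1)
    have "((\<lambda>s. u (c1 + s *\<^sub>R axis i 1)) has_real_derivative (gv (c1 + s *\<^sub>R axis i 1) \<bullet> axis i 1)) (at s)"
      using u_line y1b \<delta> by blast
    moreover have "((\<lambda>s. u (a + s *\<^sub>R axis i 1)) has_real_derivative (gv (a + s *\<^sub>R axis i 1) \<bullet> axis i 1)) (at s)"
      using u_line y2b \<delta> by blast
    ultimately show "(?\<phi> has_real_derivative gv (c1 + s *\<^sub>R axis i 1) $ i - gv (a + s *\<^sub>R axis i 1) $ i - t * H $ i $ j) (at s)"
      by (auto intro!: derivative_eq_intros simp: inner_axis)
    define y1 where "y1 = c1 + s *\<^sub>R axis i 1"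
    define y2 where "y2 = a + s *\<^sub>R axis i 1"
    have d12: "y1 - y2 = t *\<^sub>R axis j 1" by (simp add: y1_def y2_def c1_def)
    have n1: "norm (y1 - a) \<le> 2 * t"
    proof -
      have "norm (s *\<^sub>R axis i 1 + t *\<^sub>R axis j (1::real)) \<le> \<bar>s\<bar> + \<bar>t\<bar>" by (rule nrm)
      moreover have "y1 - a = s *\<^sub>R axis i 1 + t *\<^sub>R axis j (1::real)"
        by (simp add: y1_def c1_def)
      ultimately show ?thesis using s t by simp
    qed
    have n2: "norm (y2 - a) \<le> 2 * t" using s t by (simp add: y2_def norm_axis_1)
    have "norm (gv y1 - gv a - H *v (y1 - a)) \<le> \<epsilon> * norm (y1 - a)"
      using b y1b unfolding y1_def H_def by blast
    also have "\<dots> \<le> \<epsilon> * (2 * t)" using n1 e0 by (rule mult_left_mono)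
    finally have B1: "\<bar>(gv y1 - gv a - H *v (y1 - a)) $ i\<bar> \<le> \<epsilon> * (2 * t)"
      by (rule order_trans[OF component_le_norm_cart])
    have "norm (gv y2 - gv a - H *v (y2 - a)) \<le> \<epsilon> * norm (y2 - a)"
      using b y2b unfolding y2_def H_def by blast
    also have "\<dots> \<le> \<epsilon> * (2 * t)" using n2 e0 by (rule mult_left_mono)
    finally have B2: "\<bar>(gv y2 - gv a - H *v (y2 - a)) $ i\<bar> \<le> \<epsilon> * (2 * t)"
      by (rule order_trans[OF component_le_norm_cart])
    have "H *v (y1 - y2) = H *v ((y1 - a) - (y2 - a))" by simp
    also have "\<dots> = H *v (y1 - a) - H *v (y2 - a)" by (rule matrix_vector_mult_diff_distrib)
    finally have "(H *v (y1 - a)) $ i - (H *v (y2 - a)) $ i = (H *v (y1 - y2)) $ i"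
      by simp
    also have "\<dots> = t * H $ i $ j" unfolding d12 by (rule mv_axis)
    finally have "gv y1 $ i - gv y2 $ i - t * H $ i $ j
       = (gv y1 - gv a - H *v (y1 - a)) $ i - (gv y2 - gv a - H *v (y2 - a)) $ i" by simp
    then show "\<bar>gv (c1 + s *\<^sub>R axis i 1) $ i - gv (a + s *\<^sub>R axis i 1) $ i - t * H $ i $ j\<bar> \<le> 4 * \<epsilon> * t"
      using B1 B2 unfolding y1_def y2_def by linarith
  qed
  moreover have "?\<phi> 0 = u c1 - u a" by simp
  moreover have "?\<phi> t = u (a + t *\<^sub>R axis j 1 + t *\<^sub>R axis i 1) - u (a + t *\<^sub>R axis i 1) - t * t * Hm a $ i $ j"
    by (simp add: c1_def H_def)
  ultimately show ?thesis using t by (simp add: c1_def)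
qed

lemma Hm_sym: "a \<in> U \<Longrightarrow> Hm a $ i $ j = Hm a $ j $ i"
proof (rule ccontr)
  assume a: "a \<in> U" and ne: "Hm a $ i $ j \<noteq> Hm a $ j $ i"
  define \<epsilon> where "\<epsilon> = \<bar>Hm a $ i $ j - Hm a $ j $ i\<bar> / 16"
  have \<epsilon>: "\<epsilon> > 0" using ne by (simp add: \<epsilon>_def)
  obtain d1 where d1: "d1 > 0" "\<And>y. norm (y - a) < d1 \<Longrightarrow> norm (gv y - gv a - Hm a *v (y - a)) \<le> \<epsilon> * norm (y - a)"
    using gv_deriv[OF a] \<epsilon> unfolding has_derivative_at_alt by blast
  obtain d2 where d2: "d2 > 0" "ball a d2 \<subseteq> U" using U a open_contains_ball by blast
  define \<delta> where "\<delta> = min d1 d2"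
  have \<delta>: "\<delta> > 0" "ball a \<delta> \<subseteq> U" using d1 d2 by (auto simp: \<delta>_def)
  have b: "\<And>y. y \<in> ball a \<delta> \<Longrightarrow> norm (gv y - gv a - Hm a *v (y - a)) \<le> \<epsilon> * norm (y - a)"
    using d1 by (auto simp: \<delta>_def dist_norm norm_minus_commute)
  define t where "t = \<delta> / 4"
  have t: "0 < t" "2 * t < \<delta>" using \<delta> by (auto simp: t_def)
  have 1: "\<bar>(u (a + t *\<^sub>R axis j 1 + t *\<^sub>R axis i 1) - u (a + t *\<^sub>R axis i 1))
            - (u (a + t *\<^sub>R axis j 1) - u a) - t * t * Hm a $ i $ j\<bar> \<le> (4 * \<epsilon> * t) * t"
    by (rule sym_one_side[OF a \<delta>(2) b t])
  have 2: "\<bar>(u (a + t *\<^sub>R axis i 1 + t *\<^sub>R axis j 1) - u (a + t *\<^sub>R axis j 1))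
            - (u (a + t *\<^sub>R axis i 1) - u a) - t * t * Hm a $ j $ i\<bar> \<le> (4 * \<epsilon> * t) * t"
    by (rule sym_one_side[OF a \<delta>(2) b t])
  have eq: "a + t *\<^sub>R axis i 1 + t *\<^sub>R axis j 1 = a + t *\<^sub>R axis j 1 + t *\<^sub>R axis i 1"
    by (simp add: algebra_simps)
  have "\<bar>t * t * Hm a $ i $ j - t * t * Hm a $ j $ i\<bar> \<le> 8 * \<epsilon> * t * t"
    using 1 2 unfolding eq by linarith
  then have "t * t * \<bar>Hm a $ i $ j - Hm a $ j $ i\<bar> \<le> t * t * (8 * \<epsilon>)"
  proof -
    have "t * t * Hm a $ i $ j - t * t * Hm a $ j $ i = (t * t) * (Hm a $ i $ j - Hm a $ j $ i)"
      by (simp add: algebra_simps)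
    then have "\<bar>t * t * Hm a $ i $ j - t * t * Hm a $ j $ i\<bar> = (t * t) * \<bar>Hm a $ i $ j - Hm a $ j $ i\<bar>"
      by (simp add: abs_mult)
    then show ?thesis using \<open>\<bar>t * t * Hm a $ i $ j - t * t * Hm a $ j $ i\<bar> \<le> 8 * \<epsilon> * t * t\<close>
      by (simp add: algebra_simps)
  qed
  then have "\<bar>Hm a $ i $ j - Hm a $ j $ i\<bar> \<le> 8 * \<epsilon>"
    using t by (simp add: mult_le_cancel_left_pos)
  then show False using \<epsilon> by (simp add: \<epsilon>_def)
qed

end

lemma sym_inner:
  fixes A :: "real^'n^'n"
  assumes s: "\<And>i j. A $ i $ j = A $ j $ i"
  shows "x \<bullet> (A *v y) = (A *v x) \<bullet> y"
proof -
  have "x \<bullet> (A *v y) = (\<Sum>i\<in>UNIV. \<Sum>j\<in>UNIV. x$i * (A$i$j * y$j))"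
    by (simp add: inner_vec_def matrix_vector_mult_def sum_distrib_left)
  also have "\<dots> = (\<Sum>j\<in>UNIV. \<Sum>i\<in>UNIV. x$i * (A$i$j * y$j))" by (rule sum.swap)
  also have "\<dots> = (\<Sum>j\<in>UNIV. \<Sum>i\<in>UNIV. (A$j$i * x$i) * y$j)"
    by (intro sum.cong refl, subst s) (simp add: algebra_simps)
  also have "\<dots> = (A *v x) \<bullet> y"
    by (simp add: inner_vec_def matrix_vector_mult_def sum_distrib_right)
  finally show ?thesis .
qed

lemma proj_exists:
  fixes K :: "(real^'n) set"
  assumes "subspace K"
  obtains P where "linear P" "\<And>z. P z \<in> K" "\<And>z. z - P z \<in> orthogonal_comp K"
proof -
  obtain B where "B \<subseteq> K"
    and ortho: "pairwise orthogonal B" "\<And>x. x \<in> B \<Longrightarrow> norm x = 1"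
    and "independent B" "card B = dim K" "span B = K"
    using orthonormal_basis_subspace [OF assms] by metis
  then have "finite B"
    by (simp add: indep_card_eq_dim_span)
  have *: "\<forall>x\<in>B. \<forall>y\<in>B. x \<bullet> y = (if x=y then 1 else 0)"
    using ortho norm_eq_1 by (auto simp: orthogonal_def pairwise_def)
  define P where "P v = (\<Sum>b\<in>B. (v \<bullet> b) *\<^sub>R b)" for v
  show ?thesis
  proof
    show "linear P" unfolding P_def
      by (intro linearI) (auto simp: inner_add_left scaleR_add_left sum.distrib scaleR_sum_right)
    fix v
    show "P v \<in> K" unfolding P_def
      by (metis (no_types, lifting) \<open>span B = K\<close> assms subspace_sum span_base span_mul)
    show "v - P v \<in> orthogonal_comp K"
      unfolding orthogonal_comp_def orthogonal_def mem_Collect_eq P_def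
    proof
      fix y
      assume "y \<in> K"
      with \<open>span B = K\<close> span_finite [OF \<open>finite B\<close>]
      obtain c where c: "y = (\<Sum>b\<in>B. c b *\<^sub>R b)"
        by auto
      have "b \<bullet> (v - (\<Sum>b\<in>B. (v \<bullet> b) *\<^sub>R b)) = 0" if "b \<in> B" for b
        using that \<open>finite B\<close>
        by (simp add: * algebra_simps inner_sum_right if_distrib [of "(*)v" for v] inner_commute cong: if_cong)
      then show "y \<bullet> (v - (\<Sum>b\<in>B. (v \<bullet> b) *\<^sub>R b)) = 0"
        by (simp add: c inner_sum_left)
    qed
  qed
qed

lemma orth_in_both:
  assumes "subspace K" "x \<in> K" "x \<in> orthogonal_comp K"
  shows "x = 0"
  using orthogonal_Int_0[OF assms(1)] assms(2,3) by blast

locale projK =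
  fixes K :: "(real^'n) set" and P :: "real^'n \<Rightarrow> real^'n"
  assumes sub: "subspace K" and lin: "linear P" and PK: "\<And>z. P z \<in> K"
    and Porth: "\<And>z. z - P z \<in> orthogonal_comp K"
begin

lemma Porth': "orthogonal (P z) (z - P z)"
  using Porth[of z] PK[of z] unfolding orthogonal_comp_def by blast

lemma P_id: "k \<in> K \<Longrightarrow> P k = k"
proof -
  assume k: "k \<in> K"
  have "k - P k \<in> K" using k PK sub by (simp add: subspace_diff)
  then have "k - P k = 0" using orth_in_both[OF sub _ Porth[of k]] by blast
  then show ?thesis by simp
qed

lemma P_norm: "norm (P z) \<le> norm z"
proof -
  have "(norm (P z + (z - P z)))\<^sup>2 = (norm (P z))\<^sup>2 + (norm (z - P z))\<^sup>2"
    by (rule norm_add_Pythagorean[OF Porth'])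
  then have "(norm (P z))\<^sup>2 \<le> (norm z)\<^sup>2" by simp
  then show ?thesis by (rule power2_le_imp_le) simp
qed

end

lemma sym_range_orth:
  fixes H :: "real^'n^'n"
  assumes s: "\<And>i j. H $ i $ j = H $ j $ i"
  shows "H *v y \<in> orthogonal_comp {v. H *v v = 0}"
  unfolding orthogonal_comp_def orthogonal_def
proof (clarify)
  fix v assume "H *v v = 0"
  then show "v \<bullet> (H *v y) = 0" using sym_inner[OF s, of v y] by simp
qed

lemma sym_nonzero_cube:
  fixes H :: "real^'n^'n"
  assumes s: "\<And>i j. H $ i $ j = H $ j $ i" and nz: "H \<noteq> 0"
  shows "\<exists>v. (H *v v) \<bullet> (H *v (H *v v)) \<noteq> 0"
proof (rule ccontr)
  assume "\<not> ?thesis"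
  then have z: "\<And>v. (H *v v) \<bullet> (H *v (H *v v)) = 0" by blast
  have B: "(H *v a) \<bullet> (H *v (H *v b)) = 0" for a b
  proof -
    have "0 = (H *v (a + b)) \<bullet> (H *v (H *v (a + b)))" using z by simp
    also have "\<dots> = (H *v a) \<bullet> (H *v (H *v a)) + (H *v a) \<bullet> (H *v (H *v b))
                   + (H *v b) \<bullet> (H *v (H *v a)) + (H *v b) \<bullet> (H *v (H *v b))"
      by (simp add: matrix_vector_right_distrib inner_add_left inner_add_right)
    also have "(H *v b) \<bullet> (H *v (H *v a)) = (H *v a) \<bullet> (H *v (H *v b))"
      using sym_inner[OF s, of "H *v b" "H *v a"] sym_inner[OF s, of "H *v a" "H *v b"]
      by (simp add: inner_commute)
    finally show ?thesis using z by simp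
  qed
  have H2: "H *v (H *v b) = 0" for b
    using B[of "H *v b" b] sym_inner[OF s, of "H *v b" "H *v (H *v b)"] by simp
  have H1: "H *v b = 0" for b
  proof -
    have "(H *v b) \<bullet> (H *v b) = b \<bullet> (H *v (H *v b))" using sym_inner[OF s, of b "H *v b"] by simp
    then show ?thesis using H2 by simp
  qed
  then have "H = 0" by (metis matrix_eq matrix_vector_mult_0)
  then show False using nz by simp
qed

lemma mv_bound:
  fixes A :: "real^'n^'m"
  shows "norm (A *v x) \<le> (\<Sum>i\<in>UNIV. \<Sum>j\<in>UNIV. \<bar>A $ i $ j\<bar>) * norm x"
proof -
  have "norm (A *v x) \<le> (\<Sum>i\<in>UNIV. \<bar>(A *v x) $ i\<bar>)"
    by (rule norm_le_l1_cart)
  also have "\<dots> \<le> (\<Sum>i\<in>UNIV. \<Sum>j\<in>UNIV. \<bar>A $ i $ j\<bar> * norm x)"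
  proof (rule sum_mono)
    fix i
    have "\<bar>(A *v x) $ i\<bar> \<le> \<bar>\<Sum>j\<in>UNIV. A $ i $ j * x $ j\<bar>"
      by (simp add: matrix_vector_mult_def)
    also have "\<dots> \<le> (\<Sum>j\<in>UNIV. \<bar>A $ i $ j * x $ j\<bar>)"
      by (rule sum_abs)
    also have "\<dots> \<le> (\<Sum>j\<in>UNIV. \<bar>A $ i $ j\<bar> * norm x)"
      by (rule sum_mono) (simp add: abs_mult component_le_norm_cart mult_left_mono)
    finally show "\<bar>(A *v x) $ i\<bar> \<le> (\<Sum>j\<in>UNIV. \<bar>A $ i $ j\<bar> * norm x)" .
  qed
  finally show ?thesis
    by (simp add: sum_distrib_right)
qed

lemma tendsto_mv:
  fixes A :: "'a \<Rightarrow> real^'n^'m"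
  assumes "(A \<longlongrightarrow> A0) F" "(x \<longlongrightarrow> x0) F"
  shows "((\<lambda>t. A t *v x t) \<longlongrightarrow> A0 *v x0) F"
proof -
  have "((\<lambda>t. \<chi> i. \<Sum>j\<in>UNIV. A t $ i $ j * x t $ j) \<longlongrightarrow> (\<chi> i. \<Sum>j\<in>UNIV. A0 $ i $ j * x0 $ j)) F"
  proof (rule tendsto_vec_lambda)
    fix i
    show "((\<lambda>t. \<Sum>j\<in>UNIV. A t $ i $ j * x t $ j) \<longlongrightarrow> (\<Sum>j\<in>UNIV. A0 $ i $ j * x0 $ j)) F"
    proof (rule tendsto_sum)
      fix j
      have "((\<lambda>t. A t $ i) \<longlongrightarrow> A0 $ i) F" by (rule tendsto_vec_nth[OF assms(1)])
      then have a: "((\<lambda>t. A t $ i $ j) \<longlongrightarrow> A0 $ i $ j) F" by (rule tendsto_vec_nth)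
      have b: "((\<lambda>t. x t $ j) \<longlongrightarrow> x0 $ j) F" by (rule tendsto_vec_nth[OF assms(2)])
      show "((\<lambda>t. A t $ i $ j * x t $ j) \<longlongrightarrow> A0 $ i $ j * x0 $ j) F" by (rule tendsto_mult[OF a b])
    qed
  qed
  then show ?thesis unfolding matrix_vector_mult_def .
qed

lemma tendsto_trace:
  fixes A :: "'a \<Rightarrow> real^'n^'n"
  assumes "(A \<longlongrightarrow> A0) F"
  shows "((\<lambda>t. trace (A t)) \<longlongrightarrow> trace A0) F"
  unfolding trace_def
  by (intro tendsto_sum tendsto_vec_nth assms)

lemma Ck_on_subset: "Ck_on k S f \<Longrightarrow> T \<subseteq> S \<Longrightarrow> Ck_on k T f"
proof -
  assume "Ck_on k S f" "T \<subseteq> S"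
  then obtain P where "\<forall>x\<in>S. P [] x = f x"
    "\<forall>is i x. length is < k \<and> x \<in> S \<longrightarrow> ((\<lambda>t. P is (x + t *\<^sub>R axis i 1)) has_real_derivative P (i # is) x) (at 0)"
    "\<forall>is. length is \<le> k \<longrightarrow> continuous_on S (P is)"
    unfolding Ck_on_def by blast
  with \<open>T \<subseteq> S\<close> show ?thesis unfolding Ck_on_def
    by (intro exI[of _ P]) (auto intro: continuous_on_subset)
qed

definition mn :: "real^'n^'n \<Rightarrow> real" where "mn A = (\<Sum>i\<in>UNIV. \<Sum>j\<in>UNIV. \<bar>A $ i $ j\<bar>)"

lemma inner_mv_bound: "\<bar>q \<bullet> (A *v q)\<bar> \<le> mn A * (norm q)\<^sup>2"
proof -
  have "\<bar>q \<bullet> (A *v q)\<bar> \<le> norm q * norm (A *v q)" by (rule Cauchy_Schwarz_ineq2)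
  also have "\<dots> \<le> norm q * (mn A * norm q)" unfolding mn_def by (rule mult_left_mono[OF mv_bound norm_ge_zero])
  finally show ?thesis by (simp add: power2_eq_square algebra_simps)
qed

locale Main = C2loc U u P for U and u :: "real^'n \<Rightarrow> real" and P +
  assumes sub: "viscosity_subsol U u" and super: "viscosity_supersol U u"
    and Ck: "Ck_on 2 U u"
    and zU: "0 \<in> U" and g0: "gv 0 = 0"
begin

definition "H0 = Hm 0"
definition "K = {v. H0 *v v = 0}"

lemma H0_sym: "H0 $ i $ j = H0 $ j $ i"
  unfolding H0_def using Hm_sym[OF zU] .

lemma pde_at:
  assumes y: "y \<in> U" and ne: "gv y \<noteq> 0"
  shows "trace (Hm y) - (gv y \<bullet> (Hm y *v gv y)) / (norm (gv y))\<^sup>2 + 1 = 0"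
proof -
  obtain r where r: "r > 0" "ball y r \<subseteq> U" using U y open_contains_ball by blast
  have ck: "Ck_on 2 (ball y r) u" using Ck_on_subset[OF Ck r(2)] .
  have A0: "grad u y \<noteq> 0 \<longrightarrow> trace (hess u y) - (grad u y \<bullet> (hess u y *v grad u y)) / (norm (grad u y))\<^sup>2 + 1 \<ge> 0"
    using sub[unfolded viscosity_subsol_def, rule_format, of y r u] y r ck
    unfolding Let_def by auto
  have B0: "grad u y \<noteq> 0 \<longrightarrow> trace (hess u y) - (grad u y \<bullet> (hess u y *v grad u y)) / (norm (grad u y))\<^sup>2 + 1 \<le> 0"
    using super[unfolded viscosity_supersol_def, rule_format, of y r u] y r ck
    unfolding Let_def by auto
  have A: "trace (Hm y) - (gv y \<bullet> (Hm y *v gv y)) / (norm (gv y))\<^sup>2 + 1 \<ge> 0"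
    using A0 ne y by (simp add: grad_eq hess_eq)
  have B: "trace (Hm y) - (gv y \<bullet> (Hm y *v gv y)) / (norm (gv y))\<^sup>2 + 1 \<le> 0"
    using B0 ne y by (simp add: grad_eq hess_eq)
  show ?thesis using A B by linarith
qed

lemma H0_nz: "H0 \<noteq> 0"
proof
  assume H: "H0 = 0"
  obtain r where r: "r > 0" "ball 0 r \<subseteq> U" using U zU open_contains_ball by blast
  have ck: "Ck_on 2 (ball 0 r) u" using Ck_on_subset[OF Ck r(2)] .
  have B0: "grad u 0 = 0 \<longrightarrow> (\<exists>e. norm e = 1 \<and> trace (hess u 0) - e \<bullet> (hess u 0 *v e) + 1 \<le> 0)"
    using super[unfolded viscosity_supersol_def, rule_format, of 0 r u] zU r ck
    unfolding Let_def by auto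
  then have "\<exists>e. norm e = 1 \<and> trace (Hm 0) - e \<bullet> (Hm 0 *v e) + 1 \<le> 0"
    using g0 zU by (simp add: grad_eq hess_eq)
  then show False using H by (auto simp: H0_def trace_def)
qed


lemma hom_ratio:
  fixes X :: "real^'n^'n"
  assumes "t \<noteq> 0"
  shows "((t *\<^sub>R q) \<bullet> (X *v (t *\<^sub>R q))) / (norm (t *\<^sub>R q))\<^sup>2 = (q \<bullet> (X *v q)) / (norm q)\<^sup>2"
proof -
  have "((t *\<^sub>R q) \<bullet> (X *v (t *\<^sub>R q))) = (t * t) * (q \<bullet> (X *v q))"
    by (simp add: matrix_vector_mult_scaleR)
  moreover have "(norm (t *\<^sub>R q))\<^sup>2 = (t * t) * (norm q)\<^sup>2"
    by (simp add: power2_eq_square)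
  ultimately show ?thesis using assms by simp
qed

lemma q_lim:
  "((\<lambda>t. (1/t) *\<^sub>R gv (t *\<^sub>R v)) \<longlongrightarrow> H0 *v v) (at_right 0)"
proof (rule tendstoI)
  fix \<epsilon> :: real assume \<epsilon>: "\<epsilon> > 0"
  have nv: "norm v + 1 > 0" by (smt (verit) norm_ge_zero)
  define e where "e = \<epsilon> / (2 * (norm v + 1))"
  have "2 * (norm v + 1) > 0" by (smt (verit) norm_ge_zero)
  then have e: "e > 0" using \<epsilon> unfolding e_def by (rule divide_pos_pos[rotated])
  obtain d where d: "d > 0" "\<And>y. norm (y - 0) < d \<Longrightarrow> norm (gv y - gv 0 - Hm 0 *v (y - 0)) \<le> e * norm (y - 0)"
    using gv_deriv[OF zU] e unfolding has_derivative_at_alt by blast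
  have dv: "d / (norm v + 1) > 0" using d nv by simp
  have "eventually (\<lambda>t. t \<in> {0<..<d / (norm v + 1)}) (at_right 0)"
    by (rule eventually_at_right_real[OF dv])
  then show "eventually (\<lambda>t. dist ((1/t) *\<^sub>R gv (t *\<^sub>R v)) (H0 *v v) < \<epsilon>) (at_right 0)"
  proof (rule eventually_mono)
    fix t assume t: "t \<in> {0<..<d / (norm v + 1)}"
    then have t0: "t > 0" by simp
    have "norm (t *\<^sub>R v) \<le> t * (norm v + 1)" using t0 by simp
    also have "\<dots> < d" using t nv by (simp add: pos_less_divide_eq)
    finally have "norm (t *\<^sub>R v - 0) < d" by simp
    from d(2)[OF this] have "norm (gv (t *\<^sub>R v) - t *\<^sub>R (H0 *v v)) \<le> e * (t * norm v)"
      using g0 t0 by (simp add: H0_def matrix_vector_mult_scaleR)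
    moreover have "(1/t) *\<^sub>R gv (t *\<^sub>R v) - H0 *v v = (1/t) *\<^sub>R (gv (t *\<^sub>R v) - t *\<^sub>R (H0 *v v))"
      using t0 by (simp add: algebra_simps)
    ultimately have "norm ((1/t) *\<^sub>R gv (t *\<^sub>R v) - H0 *v v) = (1/t) * norm (gv (t *\<^sub>R v) - t *\<^sub>R (H0 *v v))"
      and "norm (gv (t *\<^sub>R v) - t *\<^sub>R (H0 *v v)) \<le> e * (t * norm v)" using t0 by simp_all
    then have "norm ((1/t) *\<^sub>R gv (t *\<^sub>R v) - H0 *v v) \<le> (1/t) * (e * (t * norm v))"
      using t0 by (simp only:) (rule mult_left_mono, simp_all)
    also have "\<dots> = e * norm v" using t0 by simp
    also have "\<dots> < \<epsilon>"
    proof -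
      have "e * norm v \<le> e * (norm v + 1)" using e by simp
      also have "\<dots> = \<epsilon> / 2" unfolding e_def using nv by (simp add: field_simps)
      finally show ?thesis using \<epsilon> by simp
    qed
    finally show "dist ((1/t) *\<^sub>R gv (t *\<^sub>R v)) (H0 *v v) < \<epsilon>" by (simp add: dist_norm)
  qed
qed

lemma Hm_cont0: "isCont Hm 0"
  using Hm_cont U zU continuous_on_eq_continuous_at by blast

lemma tr_ne: "trace H0 + 1 \<noteq> 0"
proof -
  obtain v where c: "(H0 *v v) \<bullet> (H0 *v (H0 *v v)) \<noteq> 0" using sym_nonzero_cube[OF _ H0_nz] H0_sym by blast
  define w where "w = H0 *v v"
  have wne: "w \<noteq> 0" using c by (auto simp: w_def)
  define q where "q t = (1/t) *\<^sub>R gv (t *\<^sub>R v)" for t :: real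
  have ql: "(q \<longlongrightarrow> w) (at_right 0)" unfolding q_def w_def by (rule q_lim)
  have sl: "((\<lambda>t::real. t *\<^sub>R v) \<longlongrightarrow> 0) (at_right 0)"
  proof -
    have "((\<lambda>t::real. t *\<^sub>R v) \<longlongrightarrow> 0 *\<^sub>R v) (at_right 0)"
      by (intro tendsto_scaleR tendsto_ident_at tendsto_const)
    then show ?thesis by simp
  qed
  have Hl: "((\<lambda>t. Hm (t *\<^sub>R v)) \<longlongrightarrow> H0) (at_right 0)"
    unfolding H0_def by (rule isCont_tendsto_compose[OF Hm_cont0 sl])
  define E where "E t = trace (Hm (t *\<^sub>R v)) - (q t \<bullet> (Hm (t *\<^sub>R v) *v q t)) / (norm (q t))\<^sup>2" for t
  have El: "(E \<longlongrightarrow> trace H0 - (w \<bullet> (H0 *v w)) / (norm w)\<^sup>2) (at_right 0)"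
    unfolding E_def
    by (intro tendsto_diff tendsto_trace Hl tendsto_divide tendsto_inner ql tendsto_mv tendsto_power tendsto_norm)
       (simp add: wne)
  have ev1: "eventually (\<lambda>t. q t \<noteq> 0) (at_right 0)"
    using tendsto_imp_eventually_ne[OF ql wne] .
  have ev2: "eventually (\<lambda>t. t *\<^sub>R v \<in> U) (at_right 0)"
  proof -
    show ?thesis using sl U zU unfolding tendsto_def by blast
  qed
  have ev3: "eventually (\<lambda>t::real. t > 0) (at_right 0)" by (simp add: eventually_at_right_less)
  have "eventually (\<lambda>t. E t = -1) (at_right 0)"
    using ev1 ev2 ev3
  proof (eventually_elim)
    case (elim t)
    have gq: "gv (t *\<^sub>R v) = t *\<^sub>R q t" using elim by (simp add: q_def)
    then have gne: "gv (t *\<^sub>R v) \<noteq> 0" using elim by simp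
    have "trace (Hm (t *\<^sub>R v)) - (gv (t *\<^sub>R v) \<bullet> (Hm (t *\<^sub>R v) *v gv (t *\<^sub>R v))) / (norm (gv (t *\<^sub>R v)))\<^sup>2 + 1 = 0"
      by (rule pde_at[OF elim(2) gne])
    then show ?case unfolding E_def gq hom_ratio[of t, OF less_imp_neq[OF elim(3), symmetric]] by simp
  qed
  then have "(E \<longlongrightarrow> -1) (at_right 0)" by (rule tendsto_eventually)
  then have "trace H0 - (w \<bullet> (H0 *v w)) / (norm w)\<^sup>2 = -1"
    using El tendsto_unique[OF trivial_limit_at_right_real] by blast
  moreover have "(w \<bullet> (H0 *v w)) / (norm w)\<^sup>2 \<noteq> 0" using c wne by (simp add: w_def)
  ultimately show ?thesis by linarith
qed


lemma K_good: "\<exists>\<delta>>0. ball 0 \<delta> \<subseteq> U \<and> (\<forall>y\<in>ball 0 \<delta>. gv y \<in> K \<longrightarrow> gv y = 0)"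
proof -
  define \<eta> where "\<eta> = \<bar>trace H0 + 1\<bar>"
  have \<eta>: "\<eta> > 0" using tr_ne by (simp add: \<eta>_def)
  have Hl: "(Hm \<longlongrightarrow> H0) (at 0)" using Hm_cont0 unfolding H0_def isCont_def .
  have l1: "((\<lambda>y. mn (Hm y - H0)) \<longlongrightarrow> mn (H0 - H0)) (at 0)"
    unfolding mn_def by (intro tendsto_sum tendsto_rabs tendsto_vec_nth tendsto_diff Hl tendsto_const)
  have l2: "((\<lambda>y. trace (Hm y)) \<longlongrightarrow> trace H0) (at 0)" by (rule tendsto_trace[OF Hl])
  have "eventually (\<lambda>y. dist (mn (Hm y - H0)) (mn (H0 - H0)) < \<eta>/2) (at 0)"
    using l1 \<eta> unfolding tendsto_iff by (meson half_gt_zero)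
  moreover have "eventually (\<lambda>y. dist (trace (Hm y)) (trace H0) < \<eta>/2) (at 0)"
    using l2 \<eta> unfolding tendsto_iff by (meson half_gt_zero)
  ultimately have "eventually (\<lambda>y. dist (mn (Hm y - H0)) (mn (H0 - H0)) < \<eta>/2 \<and> dist (trace (Hm y)) (trace H0) < \<eta>/2) (at 0)"
    by (rule eventually_conj)
  then obtain d1 where d1: "d1 > 0" "\<And>y. y \<noteq> 0 \<Longrightarrow> dist y 0 < d1 \<Longrightarrow>
      dist (mn (Hm y - H0)) (mn (H0 - H0)) < \<eta>/2 \<and> dist (trace (Hm y)) (trace H0) < \<eta>/2"
    unfolding eventually_at by blast
  obtain d2 where d2: "d2 > 0" "ball 0 d2 \<subseteq> U" using U zU open_contains_ball by blast
  define \<delta> where "\<delta> = min d1 d2"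
  show ?thesis
  proof (intro exI conjI ballI impI)
    show "\<delta> > 0" using d1 d2 by (simp add: \<delta>_def)
    show "ball 0 \<delta> \<subseteq> U" using d2 by (auto simp: \<delta>_def)
    fix y assume y: "y \<in> ball 0 \<delta>" and qK: "gv y \<in> K"
    show "gv y = 0"
    proof (rule ccontr)
      assume ne: "gv y \<noteq> 0"
      then have y0: "y \<noteq> 0" using g0 by auto
      have yU: "y \<in> U" using y d2 by (auto simp: \<delta>_def)
      have b: "mn (Hm y - H0) < \<eta>/2" "\<bar>trace (Hm y) - trace H0\<bar> < \<eta>/2"
        using d1(2)[OF y0] y by (auto simp: \<delta>_def dist_norm mn_def)
      define q where "q = gv y"
      have pde: "trace (Hm y) - (q \<bullet> (Hm y *v q)) / (norm q)\<^sup>2 + 1 = 0"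
        unfolding q_def by (rule pde_at[OF yU ne])
      have "H0 *v q = 0" using qK by (simp add: K_def q_def)
      then have "q \<bullet> (Hm y *v q) = q \<bullet> ((Hm y - H0) *v q)"
        by (simp add: matrix_vector_mult_diff_rdistrib)
      then have "\<bar>q \<bullet> (Hm y *v q)\<bar> \<le> mn (Hm y - H0) * (norm q)\<^sup>2"
        using inner_mv_bound by metis
      moreover have nq: "(norm q)\<^sup>2 > 0" using ne by (simp add: q_def)
      ultimately have "\<bar>(q \<bullet> (Hm y *v q)) / (norm q)\<^sup>2\<bar> \<le> mn (Hm y - H0)"
        by (simp add: abs_div pos_divide_le_eq)
      then show False using pde b \<eta>_def by linarith
    qed
  qed
qed

end

lemma arith_star:
  fixes t a F1 Ft :: real
  assumes t: "0 \<le> t" "t \<le> 1" and a: "0 \<le> a" and F1: "0 \<le> F1" "F1 \<le> a / 2"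
    and Ft: "0 \<le> Ft" "Ft \<le> F1 + (1 - t) * a / 2"
  shows "(t * a)\<^sup>2 + Ft\<^sup>2 \<le> a\<^sup>2 + F1\<^sup>2"
proof -
  define s where "s = 1 - t"
  have s: "0 \<le> s" "s \<le> 1" using t by (auto simp: s_def)
  have "Ft\<^sup>2 \<le> (F1 + s * a / 2)\<^sup>2" using Ft s_def by (intro power_mono) auto
  also have "\<dots> = F1\<^sup>2 + s * a * F1 + s\<^sup>2 * a\<^sup>2 / 4" by (simp add: power2_eq_square algebra_simps)
  also have "s * a * F1 \<le> s * a * (a / 2)" using s a F1 by (intro mult_left_mono) auto
  finally have 1: "Ft\<^sup>2 \<le> F1\<^sup>2 + s * a\<^sup>2 / 2 + s\<^sup>2 * a\<^sup>2 / 4" by (simp add: power2_eq_square algebra_simps)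
  have 2: "(t * a)\<^sup>2 = (1 - s)\<^sup>2 * a\<^sup>2" by (simp add: s_def power_mult_distrib)
  have 3: "(1 - s)\<^sup>2 + s / 2 + s\<^sup>2 / 4 \<le> 1"
  proof -
    have "(1 - s)\<^sup>2 + s / 2 + s\<^sup>2 / 4 = 1 - s * (3/2 - 5 * s / 4)" by (simp add: power2_eq_square algebra_simps)
    moreover have "s * (3/2 - 5 * s / 4) \<ge> 0" using s by (intro mult_nonneg_nonneg) auto
    ultimately show ?thesis by linarith
  qed
  have "(t * a)\<^sup>2 + Ft\<^sup>2 \<le> ((1 - s)\<^sup>2 + s / 2 + s\<^sup>2 / 4) * a\<^sup>2 + F1\<^sup>2"
  proof -
    have "((1 - s)\<^sup>2 + s / 2 + s\<^sup>2 / 4) * a\<^sup>2 + F1\<^sup>2 = (1 - s)\<^sup>2 * a\<^sup>2 + (F1\<^sup>2 + s * a\<^sup>2 / 2 + s\<^sup>2 * a\<^sup>2 / 4)"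
      by (simp add: algebra_simps)
    then show ?thesis using 1 2 by linarith
  qed
  also have "\<dots> \<le> 1 * a\<^sup>2 + F1\<^sup>2" using 3 by (intro add_right_mono mult_right_mono) auto
  finally show ?thesis by simp
qed

lemma cont_blinfun_mv:
  fixes M :: "'a::topological_space \<Rightarrow> real^'n^'n" and L :: "real^'n \<Rightarrow> real^'n"
  assumes L: "linear L" and M: "continuous_on S M"
  shows "continuous_on S (\<lambda>z. Blinfun (\<lambda>h. L h + M z *v h))"
proof -
  have bl: "bounded_linear (\<lambda>h. L h + M z *v h)" for z
  proof -
    have "linear (\<lambda>h. L h + M z *v h)" by (intro linear_compose_add L matrix_vector_mul_linear)
    then show ?thesis by (simp add: linear_conv_bounded_linear)
  qed
  have app: "blinfun_apply (Blinfun (\<lambda>h. L h + M z *v h)) = (\<lambda>h. L h + M z *v h)" for z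
    by (rule bounded_linear_Blinfun_apply[OF bl])
  show ?thesis unfolding continuous_on_def
  proof (intro ballI)
    fix z assume z: "z \<in> S"
    have Ml: "(M \<longlongrightarrow> M z) (at z within S)" using M z unfolding continuous_on_def by blast
    have ml: "((\<lambda>y. mn (M y - M z)) \<longlongrightarrow> mn (M z - M z)) (at z within S)"
      unfolding mn_def by (intro tendsto_sum tendsto_rabs tendsto_vec_nth tendsto_diff Ml tendsto_const)
    have "((\<lambda>y. Blinfun (\<lambda>h. L h + M y *v h) - Blinfun (\<lambda>h. L h + M z *v h)) \<longlongrightarrow> 0) (at z within S)"
    proof (rule Lim_null_comparison)
      show "((\<lambda>y. mn (M y - M z)) \<longlongrightarrow> 0) (at z within S)" using ml by (simp add: mn_def)
      show "\<forall>\<^sub>F y in at z within S. norm (Blinfun (\<lambda>h. L h + M y *v h) - Blinfun (\<lambda>h. L h + M z *v h)) \<le> mn (M y - M z)"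
      proof (rule always_eventually, rule allI, rule norm_blinfun_bound)
        fix y
        show "0 \<le> mn (M y - M z)" unfolding mn_def by (intro sum_nonneg) auto
        fix h
        have "blinfun_apply (Blinfun (\<lambda>h. L h + M y *v h) - Blinfun (\<lambda>h. L h + M z *v h)) h = (M y - M z) *v h"
          by (simp add: blinfun.diff_left app matrix_vector_mult_diff_rdistrib)
        then show "norm (blinfun_apply (Blinfun (\<lambda>h. L h + M y *v h) - Blinfun (\<lambda>h. L h + M z *v h)) h) \<le> mn (M y - M z) * norm h"
          using mv_bound[of "M y - M z" h] by (simp add: mn_def)
      qed
    qed
    then show "((\<lambda>y. Blinfun (\<lambda>h. L h + M y *v h)) \<longlongrightarrow> Blinfun (\<lambda>h. L h + M z *v h)) (at z within S)"
      using Lim_null by blast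
  qed
qed

lemma inv_cont_at:
  fixes A B :: "'a::topological_space \<Rightarrow> ('b::real_normed_vector \<Rightarrow>\<^sub>L 'b)"
  assumes Al: "(A \<longlongrightarrow> A y0) F"
    and inv0: "\<And>x. B y0 (A y0 x) = x" "\<And>x. A y0 (B y0 x) = x"
    and evinv: "eventually (\<lambda>y. \<forall>x. B y (A y x) = x \<and> A y (B y x) = x) F"
  shows "(B \<longlongrightarrow> B y0) F"
proof -
  define c where "c = norm (B y0) + 1"
  have c: "c > 0" by (simp add: c_def add_nonneg_pos)
  have ev0: "eventually (\<lambda>y. norm (A y - A y0) < 1 / (2 * c)) F"
    using Al c unfolding tendsto_iff dist_norm by simp
  have ev: "eventually (\<lambda>y. norm (A y - A y0) < 1 / (2 * c) \<and> (\<forall>x. B y (A y x) = x \<and> A y (B y x) = x)) F"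
    using ev0 evinv by (rule eventually_conj)
  have "((\<lambda>y. B y - B y0) \<longlongrightarrow> 0) F"
  proof (rule Lim_null_comparison)
    have "((\<lambda>y. (2 * c * c) * norm (A y - A y0)) \<longlongrightarrow> (2 * c * c) * 0) F"
      using Al unfolding Lim_null[of A] by (intro tendsto_mult tendsto_const) (simp add: tendsto_norm_zero_iff)
    then show "((\<lambda>y. (2 * c * c) * norm (A y - A y0)) \<longlongrightarrow> 0) F" by simp
    show "\<forall>\<^sub>F y in F. norm (B y - B y0) \<le> 2 * c * c * norm (A y - A y0)"
      using ev
    proof (rule eventually_mono)
      fix y assume yy: "norm (A y - A y0) < 1 / (2 * c) \<and> (\<forall>x. B y (A y x) = x \<and> A y (B y x) = x)"
      then have y: "norm (A y - A y0) < 1 / (2 * c)" by blast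
      have inv: "\<And>x. B y (A y x) = x" "\<And>x. A y (B y x) = x" using yy by auto
      have lb: "norm z \<le> c * norm (A y0 z)" for z
      proof -
        have "norm z = norm (B y0 (A y0 z))" by (simp add: inv0)
        also have "\<dots> \<le> norm (B y0) * norm (A y0 z)" by (rule norm_blinfun)
        also have "\<dots> \<le> c * norm (A y0 z)" by (rule mult_right_mono) (auto simp: c_def)
        finally show ?thesis .
      qed
      have By: "norm (B y x) \<le> 2 * c * norm x" for x
      proof -
        define z where "z = B y x"
        have xz: "x = A y z" by (simp add: z_def inv)
        have "norm (A y0 z) \<le> norm (A y z) + norm ((A y - A y0) z)"
        proof -
          have "A y0 z = A y z - (A y - A y0) z" by (simp add: blinfun.diff_left)
          then show ?thesis by (metis norm_triangle_ineq4)
        qed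
        also have "norm ((A y - A y0) z) \<le> norm (A y - A y0) * norm z" by (rule norm_blinfun)
        also have "\<dots> \<le> (1 / (2 * c)) * norm z" using y by (intro mult_right_mono) auto
        finally have "norm (A y0 z) \<le> norm x + (1 / (2 * c)) * norm z" by (simp add: xz)
        then have "c * norm (A y0 z) \<le> c * (norm x + (1 / (2 * c)) * norm z)" using c by (intro mult_left_mono) auto
        also have "\<dots> = c * norm x + norm z / 2" using c by (simp add: field_simps)
        finally have "c * norm (A y0 z) \<le> c * norm x + norm z / 2" .
        with lb[of z] have "norm z \<le> c * norm x + norm z / 2" by linarith
        then show ?thesis by (simp add: z_def)
      qed
      show "norm (B y - B y0) \<le> 2 * c * c * norm (A y - A y0)"
      proof (rule norm_blinfun_bound)
        show "0 \<le> 2 * c * c * norm (A y - A y0)" using c by simp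
        fix x
        have "(B y - B y0) x = B y ((A y0 - A y) (B y0 x))"
          by (simp add: blinfun.diff_left blinfun.diff_right inv inv0)
        then have "norm ((B y - B y0) x) \<le> 2 * c * norm ((A y0 - A y) (B y0 x))" using By by simp
        also have "\<dots> \<le> 2 * c * (norm (A y0 - A y) * norm (B y0 x))"
          using c by (intro mult_left_mono norm_blinfun) auto
        also have "\<dots> \<le> 2 * c * (norm (A y0 - A y) * (c * norm x))"
        proof -
          have "norm (B y0 x) \<le> norm (B y0) * norm x" by (rule norm_blinfun)
          also have "\<dots> \<le> c * norm x" by (rule mult_right_mono) (auto simp: c_def)
          finally show ?thesis using c by (intro mult_left_mono) auto
        qed
        also have "\<dots> = 2 * c * c * norm (A y - A y0) * norm x" by (simp add: norm_minus_commute)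
        finally show "norm (blinfun_apply (B y - B y0) x) \<le> 2 * c * c * norm (A y - A y0) * norm x" .
      qed
    qed
  qed
  then show ?thesis using Lim_null by blast
qed

context Main begin

lemma K_sub: "subspace K"
  unfolding K_def subspace_def
  by (simp add: matrix_vector_right_distrib matrix_vector_mult_scaleR)

lemma H0_ker_orth: "H0 *v y \<in> orthogonal_comp K"
  unfolding K_def by (rule sym_range_orth[OF H0_sym])

lemma main_result:
  "\<exists>\<epsilon>>0. \<exists>\<Omega> f.
           \<Omega> \<subseteq> K \<and> openin (top_of_set K) \<Omega> \<and> connected \<Omega> \<and> 0 \<in> \<Omega> \<and>
           (\<forall>x\<in>\<Omega>. f x \<in> orthogonal_comp K) \<and> C1_on \<Omega> f \<and>
           ball 0 \<epsilon> \<inter> {x\<in>U. gv x = 0} = {x + f x | x. x \<in> \<Omega>} \<and>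
           (\<exists>c. \<forall>x \<in> ball 0 \<epsilon> \<inter> {x\<in>U. gv x = 0}. u x = c)"
proof -
  obtain Pk where Pk: "linear Pk" "\<And>z. Pk z \<in> K" "\<And>z. z - Pk z \<in> orthogonal_comp K"
    using proj_exists[OF K_sub] by blast
  interpret pk: projK K Pk by (rule projK.intro[OF K_sub Pk])
  have blPk: "bounded_linear Pk" using Pk(1) by (simp add: linear_conv_bounded_linear)
  have Pk_deriv: "(Pk has_derivative Pk) F" for F
    using bounded_linear.has_derivative[OF blPk has_derivative_ident] by simp
  define \<Phi> where "\<Phi> z = Pk z + gv z" for z
  define \<Phi>' where "\<Phi>' z = Blinfun (\<lambda>h. Pk h + Hm z *v h)" for z
  have blz: "bounded_linear (\<lambda>h. Pk h + Hm z *v h)" for z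
  proof -
    have "linear (\<lambda>h. Pk h + Hm z *v h)" by (intro linear_compose_add Pk(1) matrix_vector_mul_linear)
    then show ?thesis by (simp add: linear_conv_bounded_linear)
  qed
  have \<Phi>'app: "blinfun_apply (\<Phi>' z) = (\<lambda>h. Pk h + Hm z *v h)" for z
    unfolding \<Phi>'_def by (rule bounded_linear_Blinfun_apply[OF blz])
  have der\<Phi>: "(\<Phi> has_derivative blinfun_apply (\<Phi>' z)) (at z)" if "z \<in> U" for z
    unfolding \<Phi>'app \<Phi>_def by (intro has_derivative_add Pk_deriv gv_deriv that)
  have cont\<Phi>': "continuous_on U \<Phi>'"
    unfolding \<Phi>'_def by (rule cont_blinfun_mv[OF Pk(1) Hm_cont])
  define L0 where "L0 h = Pk h + H0 *v h" for h
  have linL0: "linear L0" unfolding L0_def by (intro linear_compose_add Pk(1) matrix_vector_mul_linear)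
  have injL0: "inj L0"
  proof -
    have "h = 0" if h: "L0 h = 0" for h
    proof -
      have e: "H0 *v h = - Pk h" using h by (simp add: L0_def eq_neg_iff_add_eq_0 add.commute)
      have "H0 *v h \<in> K" unfolding e using Pk(2) K_sub by (simp add: subspace_neg)
      then have "H0 *v h = 0" using orth_in_both[OF K_sub _ H0_ker_orth] by blast
      then have hK: "h \<in> K" by (simp add: K_def)
      then have "Pk h = h" by (rule pk.P_id)
      then show "h = 0" using e \<open>H0 *v h = 0\<close> by simp
    qed
    then show ?thesis using linL0 by (simp add: linear_inj_iff_eq_0)
  qed
  obtain G where G: "linear G" "G \<circ> L0 = id"
    using linear_injective_left_inverse[OF linL0 injL0] by blast
  have blG: "bounded_linear G" using G(1) by (simp add: linear_conv_bounded_linear)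
  have \<Phi>'0: "blinfun_apply (\<Phi>' 0) = L0" by (simp add: \<Phi>'app L0_def H0_def fun_eq_iff)
  have invf: "Blinfun G o\<^sub>L \<Phi>' 0 = id_blinfun"
    by (rule blinfun_eqI) (simp add: bounded_linear_Blinfun_apply[OF blG] \<Phi>'0 pointfree_idE[OF G(2)])
  obtain U' V g g' where IFT: "open U'" "U' \<subseteq> U" "0 \<in> U'" "open V" "\<Phi> 0 \<in> V" "homeomorphism U' V \<Phi> g"
    "\<And>y. y \<in> V \<Longrightarrow> (g has_derivative (g' y)) (at y)"
    "\<And>y. y \<in> V \<Longrightarrow> g' y = inv (blinfun_apply (\<Phi>'(g y)))"
    "\<And>y. y \<in> V \<Longrightarrow> bij (blinfun_apply (\<Phi>'(g y)))"
    using inverse_function_theorem[OF U der\<Phi> cont\<Phi>' zU invf] by blast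
  have \<Phi>0: "\<Phi> 0 = 0" using g0 by (simp add: \<Phi>_def linear_0[OF Pk(1)])
  have hom: "\<And>x. x \<in> U' \<Longrightarrow> g (\<Phi> x) = x" "\<Phi> ` U' = V" "\<And>y. y \<in> V \<Longrightarrow> \<Phi> (g y) = y"
    "g ` V = U'" "continuous_on V g"
    using IFT(6) unfolding homeomorphism_def by auto
  have gz: "g 0 = 0" using hom(1)[OF IFT(3)] \<Phi>0 by simp
  have zV: "0 \<in> V" using IFT(5) \<Phi>0 by simp
  define Bl where "Bl y = Blinfun (g' y)" for y
  have Blapp: "blinfun_apply (Bl y) = g' y" if "y \<in> V" for y
    unfolding Bl_def using IFT(7)[OF that] has_derivative_bounded_linear bounded_linear_Blinfun_apply by blast
  define A where "A y = \<Phi>' (g y)" for y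
  have invA: "Bl y (A y x) = x \<and> A y (Bl y x) = x" if "y \<in> V" for y x
  proof -
    have b: "bij (blinfun_apply (A y))" using IFT(9)[OF that] by (simp add: A_def)
    have "Bl y (A y x) = inv (blinfun_apply (A y)) (A y x)" using Blapp[OF that] IFT(8)[OF that] by (simp add: A_def)
    also have "\<dots> = x" using b by (simp add: bij_is_inj)
    finally have 1: "Bl y (A y x) = x" .
    have "A y (Bl y x) = A y (inv (blinfun_apply (A y)) x)" using Blapp[OF that] IFT(8)[OF that] by (simp add: A_def)
    also have "\<dots> = x" using b by (simp add: bij_is_surj surj_f_inv_f)
    finally show ?thesis using 1 by simp
  qed
  have contA: "continuous_on V A"
    unfolding A_def
    by (rule continuous_on_compose2[OF cont\<Phi>' hom(5)]) (use hom(4) IFT(2) in auto)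
  have contBl: "continuous_on V Bl"
    unfolding continuous_on_def
  proof
    fix y0 assume y0: "y0 \<in> V"
    have Al: "(A \<longlongrightarrow> A y0) (at y0 within V)" using contA y0 unfolding continuous_on_def by blast
    have ev: "eventually (\<lambda>y. \<forall>x. Bl y (A y x) = x \<and> A y (Bl y x) = x) (at y0 within V)"
      using invA by (auto simp: eventually_at_filter)
    show "(Bl \<longlongrightarrow> Bl y0) (at y0 within V)"
      by (rule inv_cont_at[OF Al _ _ ev]) (use invA[OF y0] in auto)
  qed
  have Bl0K: "Bl 0 k = k" if "k \<in> K" for k
  proof -
    have "A 0 k = k" using that pk.P_id by (simp add: A_def gz \<Phi>'app H0_def[symmetric] K_def)
    then show ?thesis using invA[OF zV, of k] by simp
  qed
  obtain \<delta> where \<delta>: "\<delta> > 0" "ball 0 \<delta> \<subseteq> U" "\<And>y. y \<in> ball 0 \<delta> \<Longrightarrow> gv y \<in> K \<Longrightarrow> gv y = 0"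
    using K_good by blast
  obtain e1 where e1: "e1 > 0" "ball 0 e1 \<subseteq> U'" using IFT(1,3) open_contains_ball by blast
  define \<epsilon>0 where "\<epsilon>0 = min \<delta> e1"
  have \<epsilon>0: "\<epsilon>0 > 0" "ball 0 \<epsilon>0 \<subseteq> U'" "\<epsilon>0 \<le> \<delta>" using \<delta> e1 by (auto simp: \<epsilon>0_def)
  obtain r1 where r1: "r1 > 0" "ball 0 r1 \<subseteq> V" using IFT(4) zV open_contains_ball by blast
  obtain r2 where r2: "r2 > 0" "\<And>y. y \<in> V \<Longrightarrow> dist y 0 < r2 \<Longrightarrow> dist (g y) (g 0) < \<epsilon>0"
    using hom(5) zV \<epsilon>0(1) unfolding continuous_on_iff by blast
  obtain r3 where r3: "r3 > 0" "\<And>y. y \<in> V \<Longrightarrow> dist y 0 < r3 \<Longrightarrow> dist (Bl y) (Bl 0) < 1/2"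
    using contBl zV unfolding continuous_on_iff by (meson half_gt_zero zero_less_one)
  define \<rho> where "\<rho> = min r1 (min r2 r3)"
  have \<rho>: "\<rho> > 0" "ball 0 \<rho> \<subseteq> V" using r1 r2 r3 by (auto simp: \<rho>_def)
  have g\<rho>: "norm (g y) < \<epsilon>0" if "norm y < \<rho>" for y
    using r2(2)[of y] that \<rho>(2) gz by (auto simp: \<rho>_def dist_norm)
  have Bl\<rho>: "norm (Bl y - Bl 0) \<le> 1/2" if "norm y < \<rho>" for y
    using r3(2)[of y] that \<rho>(2) by (auto simp: \<rho>_def dist_norm)
  have key: "y \<in> V \<and> g y \<in> U' \<and> g y \<in> U \<and> norm (g y) < \<epsilon>0 \<and> gv (g y) = 0 \<and> Pk (g y) = y
             \<and> g y - y \<in> orthogonal_comp K"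
    if yK: "y \<in> K" and yn: "norm y < \<rho>" for y
  proof -
    have yV: "y \<in> V" using \<rho>(2) yn by auto
    have gU': "g y \<in> U'" using hom(4) yV by auto
    have gU: "g y \<in> U" using gU' IFT(2) by auto
    have gn: "norm (g y) < \<epsilon>0" by (rule g\<rho>[OF yn])
    have "\<Phi> (g y) = y" using hom(3)[OF yV] .
    then have e: "gv (g y) = y - Pk (g y)" by (simp add: \<Phi>_def algebra_simps)
    have "gv (g y) \<in> K" unfolding e using K_sub yK Pk(2) by (simp add: subspace_diff)
    moreover have "g y \<in> ball 0 \<delta>" using gn \<epsilon>0(3) by simp
    ultimately have gv0: "gv (g y) = 0" using \<delta>(3) by blast
    then have Pg: "Pk (g y) = y" using e by simp
    have "g y - y \<in> orthogonal_comp K" using Pk(3)[of "g y"] Pg by simp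
    then show ?thesis using yV gU' gU gn gv0 Pg by blast
  qed
  define f where "f x = g x - x" for x
  have fder: "(f has_derivative (\<lambda>h. g' y h - h)) (at y)" if "y \<in> V" for y
    unfolding f_def by (intro has_derivative_diff IFT(7) that has_derivative_ident)
  have Pkn: "norm (Pk z) < \<rho>" if "z \<in> ball 0 \<rho>" for z
    using pk.P_norm[of z] that by simp
  have flip: "norm (f a - f b) \<le> 1/2 * norm (a - b)"
    if a: "a \<in> K" "norm a < \<rho>" and b: "b \<in> K" "norm b < \<rho>" for a b
  proof -
    have "norm ((\<lambda>z. f (Pk z)) a - (\<lambda>z. f (Pk z)) b) \<le> 1/2 * norm (a - b)"
    proof (rule differentiable_bound[where S = "ball 0 \<rho>" and f' = "\<lambda>z h. g' (Pk z) (Pk h) - Pk h"])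
      show "convex (ball (0::real^'n) \<rho>)" by simp
      show "a \<in> ball 0 \<rho>" "b \<in> ball 0 \<rho>" using a b by auto
      fix z :: "real^'n" assume z: "z \<in> ball 0 \<rho>"
      have PzV: "Pk z \<in> V" using Pkn[OF z] \<rho>(2) by auto
      show "((\<lambda>z. f (Pk z)) has_derivative (\<lambda>h. g' (Pk z) (Pk h) - Pk h)) (at z within ball 0 \<rho>)"
        using has_derivative_compose[OF Pk_deriv fder[OF PzV]] .
      show "onorm (\<lambda>h. g' (Pk z) (Pk h) - Pk h) \<le> 1/2"
      proof (rule onorm_le)
        fix h
        have "g' (Pk z) (Pk h) - Pk h = (Bl (Pk z) - Bl 0) (Pk h)"
          using Blapp[OF PzV] Bl0K[OF Pk(2)] by (simp add: blinfun.diff_left)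
        also have "norm \<dots> \<le> norm (Bl (Pk z) - Bl 0) * norm (Pk h)" by (rule norm_blinfun)
        also have "\<dots> \<le> 1/2 * norm h"
          using Bl\<rho>[OF Pkn[OF z]] pk.P_norm[of h] by (intro mult_mono) auto
        finally show "norm (g' (Pk z) (Pk h) - Pk h) \<le> 1/2 * norm h" .
      qed
    qed
    then show ?thesis using pk.P_id a b by simp
  qed
  have f0: "f 0 = 0" by (simp add: f_def gz)
  have fsmall: "norm (f y) \<le> 1/2 * norm y" if "y \<in> K" "norm y < \<rho>" for y
    using flip[OF that, of 0] f0 \<rho> K_sub by (simp add: subspace_0)
  have gdec: "(norm (g y))\<^sup>2 = (norm y)\<^sup>2 + (norm (f y))\<^sup>2" if "y \<in> K" "norm y < \<rho>" for y
  proof -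
    have "f y \<in> orthogonal_comp K" using key[OF that] by (simp add: f_def)
    then have "orthogonal y (f y)" using that(1) unfolding orthogonal_comp_def by blast
    then have "(norm (y + f y))\<^sup>2 = (norm y)\<^sup>2 + (norm (f y))\<^sup>2" by (rule norm_add_Pythagorean)
    then show ?thesis by (simp add: f_def)
  qed
  define \<epsilon> where "\<epsilon> = min \<epsilon>0 \<rho>"
  have \<epsilon>: "\<epsilon> > 0" "\<epsilon> \<le> \<epsilon>0" "\<epsilon> \<le> \<rho>" using \<epsilon>0 \<rho> by (auto simp: \<epsilon>_def)
  define \<Omega> where "\<Omega> = {x \<in> K. norm x < \<rho> \<and> norm (g x) < \<epsilon>}"
  have \<Omega>K: "\<Omega> \<subseteq> K" by (auto simp: \<Omega>_def)
  have \<Omega>V: "\<Omega> \<subseteq> V" using \<rho>(2) by (auto simp: \<Omega>_def)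
  have star: "t *\<^sub>R x \<in> \<Omega>" if x: "x \<in> \<Omega>" and t: "0 \<le> t" "t \<le> 1" for x t
  proof -
    have xK: "x \<in> K" and xr: "norm x < \<rho>" and gx: "norm (g x) < \<epsilon>" using x by (auto simp: \<Omega>_def)
    have txK: "t *\<^sub>R x \<in> K" using K_sub xK by (simp add: subspace_scale)
    have "norm (t *\<^sub>R x) = t * norm x" using t by simp
    also have "\<dots> \<le> norm x" using t by (simp add: mult_left_le_one_le)
    finally have txn: "norm (t *\<^sub>R x) \<le> norm x" .
    then have txr: "norm (t *\<^sub>R x) < \<rho>" using xr by simp
    have "norm (f (t *\<^sub>R x)) \<le> norm (f x) + norm (f (t *\<^sub>R x) - f x)"
      by (metis norm_triangle_sub add.commute)
    also have "norm (f (t *\<^sub>R x) - f x) \<le> 1/2 * norm (t *\<^sub>R x - x)" by (rule flip[OF txK txr xK xr])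
    also have "norm (t *\<^sub>R x - x) = (1 - t) * norm x"
    proof -
      have "t *\<^sub>R x - x = - ((1 - t) *\<^sub>R x)" by (simp add: algebra_simps)
      then show ?thesis using t by simp
    qed
    finally have Ft: "norm (f (t *\<^sub>R x)) \<le> norm (f x) + (1 - t) * norm x / 2" by simp
    have "(t * norm x)\<^sup>2 + (norm (f (t *\<^sub>R x)))\<^sup>2 \<le> (norm x)\<^sup>2 + (norm (f x))\<^sup>2"
      by (rule arith_star[OF t norm_ge_zero norm_ge_zero _ norm_ge_zero Ft]) (use fsmall[OF xK xr] in simp)
    then have "(norm (g (t *\<^sub>R x)))\<^sup>2 \<le> (norm (g x))\<^sup>2"
      using gdec[OF txK txr] gdec[OF xK xr] t by simp
    then have "norm (g (t *\<^sub>R x)) \<le> norm (g x)" by (rule power2_le_imp_le) simp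
    then show ?thesis using gx txK txr by (auto simp: \<Omega>_def)
  qed
  have z\<Omega>: "0 \<in> \<Omega>" using \<rho> \<epsilon> gz K_sub by (simp add: \<Omega>_def subspace_0)
  have conn: "connected \<Omega>"
  proof (rule starlike_imp_connected)
    show "starlike \<Omega>" unfolding starlike_def
    proof (intro bexI[OF _ z\<Omega>] ballI subsetI)
      fix x y assume x: "x \<in> \<Omega>" and y: "y \<in> closed_segment 0 x"
      then obtain t where "0 \<le> t" "t \<le> 1" "y = t *\<^sub>R x" by (auto simp: closed_segment_def)
      then show "y \<in> \<Omega>" using star[OF x] by simp
    qed
  qed
  have opn: "openin (top_of_set K) \<Omega>"
  proof -
    have "continuous_on (ball 0 \<rho>) g" by (rule continuous_on_subset[OF hom(5) \<rho>(2)])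
    then have "open (ball 0 \<rho> \<inter> g -` ball 0 \<epsilon>)" by (rule continuous_open_preimage) auto
    moreover have "\<Omega> = K \<inter> (ball 0 \<rho> \<inter> g -` ball 0 \<epsilon>)" by (auto simp: \<Omega>_def)
    ultimately show ?thesis by auto
  qed
  have forth: "\<forall>x\<in>\<Omega>. f x \<in> orthogonal_comp K"
    using key by (auto simp: \<Omega>_def f_def)
  have C1: "C1_on \<Omega> f"
    unfolding C1_on_def
  proof (intro exI conjI ballI)
    fix x assume x: "x \<in> \<Omega>"
    have xV: "x \<in> V" using x \<Omega>V by auto
    have "blinfun_apply (Bl x - id_blinfun) = (\<lambda>h. g' x h - h)"
      using Blapp[OF xV] by (simp add: blinfun.diff_left fun_eq_iff)
    then show "(f has_derivative blinfun_apply (Bl x - id_blinfun)) (at x within \<Omega>)"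
      using has_derivative_at_withinI[OF fder[OF xV]] by simp
  next
    show "continuous_on \<Omega> (\<lambda>x. Bl x - id_blinfun)"
      by (intro continuous_on_diff continuous_on_subset[OF contBl \<Omega>V] continuous_on_const)
  qed
  have graph: "ball 0 \<epsilon> \<inter> {x\<in>U. gv x = 0} = {x + f x | x. x \<in> \<Omega>}"
  proof
    show "ball 0 \<epsilon> \<inter> {x\<in>U. gv x = 0} \<subseteq> {x + f x | x. x \<in> \<Omega>}"
    proof
      fix z assume z: "z \<in> ball 0 \<epsilon> \<inter> {x\<in>U. gv x = 0}"
      have zU': "z \<in> U'" using z \<epsilon>(2) \<epsilon>0(2) by auto
      define x where "x = Pk z"
      have "\<Phi> z = x" using z by (simp add: \<Phi>_def x_def)
      then have gx: "g x = z" using hom(1)[OF zU'] by simp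
      have "x \<in> K" by (simp add: x_def Pk(2))
      moreover have "norm x < \<rho>" using pk.P_norm[of z] z \<epsilon>(3) by (simp add: x_def)
      moreover have "norm (g x) < \<epsilon>" using z gx by simp
      ultimately have "x \<in> \<Omega>" by (simp add: \<Omega>_def)
      moreover have "z = x + f x" by (simp add: f_def gx)
      ultimately show "z \<in> {x + f x | x. x \<in> \<Omega>}" by blast
    qed
    show "{x + f x | x. x \<in> \<Omega>} \<subseteq> ball 0 \<epsilon> \<inter> {x\<in>U. gv x = 0}"
    proof
      fix z assume "z \<in> {x + f x | x. x \<in> \<Omega>}"
      then obtain x where x: "x \<in> \<Omega>" "z = x + f x" by blast
      then have "z = g x" by (simp add: f_def)
      moreover have "x \<in> K" "norm x < \<rho>" "norm (g x) < \<epsilon>" using x by (auto simp: \<Omega>_def)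
      ultimately show "z \<in> ball 0 \<epsilon> \<inter> {x\<in>U. gv x = 0}" using key by auto
    qed
  qed
  have const: "\<exists>c. \<forall>x \<in> ball 0 \<epsilon> \<inter> {x\<in>U. gv x = 0}. u x = c"
  proof -
    have "\<exists>c. \<forall>z\<in>ball 0 \<rho>. u (g (Pk z)) = c"
    proof (rule has_derivative_zero_constant)
      show "convex (ball (0::real^'n) \<rho>)" by simp
      fix z :: "real^'n" assume z: "z \<in> ball 0 \<rho>"
      have kz: "Pk z \<in> K" "norm (Pk z) < \<rho>" using Pk(2) Pkn[OF z] by auto
      note kk = key[OF kz]
      have "((\<lambda>z. g (Pk z)) has_derivative (\<lambda>h. g' (Pk z) (Pk h))) (at z within ball 0 \<rho>)"
        using has_derivative_compose[OF Pk_deriv IFT(7)] kk by blast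
      from has_derivative_compose[OF this u_deriv] kk
      have "((\<lambda>z. u (g (Pk z))) has_derivative (\<lambda>h. gv (g (Pk z)) \<bullet> g' (Pk z) (Pk h))) (at z within ball 0 \<rho>)"
        by blast
      then show "((\<lambda>z. u (g (Pk z))) has_derivative (\<lambda>h. 0)) (at z within ball 0 \<rho>)"
        using kk by simp
    qed
    then obtain c where c: "\<And>z. z \<in> ball 0 \<rho> \<Longrightarrow> u (g (Pk z)) = c" by blast
    show ?thesis
    proof (intro exI ballI)
      fix w assume "w \<in> ball 0 \<epsilon> \<inter> {x\<in>U. gv x = 0}"
      then obtain x where x: "x \<in> \<Omega>" "w = x + f x" using graph by blast
      then have "w = g x" "x \<in> K" "norm x < \<rho>" by (auto simp: f_def \<Omega>_def)
      then show "u w = c" using c[of x] pk.P_id by simp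
    qed
  qed
  show ?thesis
    using \<epsilon>(1) \<Omega>K opn conn z\<Omega> forth C1 graph const by blast
qed

end

theorem proposition2p4:
  fixes M D :: "(real^'n) set" and u :: "real^'n \<Rightarrow> real"
  assumes "mean_convex_hypersurface M D"
    and "arrival_time M D u"
    and "Ck_on 2 (interior D) u"
    and "0 \<in> interior D"
    and "grad u 0 = 0"
    and "K = {v. hess u 0 *v v = 0}"
  shows "\<exists>\<epsilon>>0. \<exists>\<Omega> f.
           \<Omega> \<subseteq> K \<and> openin (top_of_set K) \<Omega> \<and> connected \<Omega> \<and> 0 \<in> \<Omega> \<and>
           (\<forall>x\<in>\<Omega>. f x \<in> orthogonal_comp K) \<and> C1_on \<Omega> f \<and>
           ball 0 \<epsilon> \<inter> singular_set D u = {x + f x | x. x \<in> \<Omega>} \<and>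
           (\<exists>c. \<forall>x \<in> ball 0 \<epsilon> \<inter> singular_set D u. u x = c)"
proof -
  obtain P where C2: "C2loc (interior D) u P" using C2locI[OF assms(3) open_interior] by blast
  interpret C2loc "interior D" u P by (rule C2)
  have sub: "viscosity_subsol (interior D) u" and super: "viscosity_supersol (interior D) u"
    using assms(2) unfolding arrival_time_def by auto
  have g0: "gv 0 = 0" using assms(4,5) grad_eq by simp
  interpret m: Main "interior D" u P
    by (rule Main.intro[OF C2]) (unfold_locales, fact sub, fact super, fact assms(3), fact assms(4), fact g0)
  have KK: "K = m.K" unfolding assms(6) m.K_def m.H0_def using hess_eq[OF assms(4)] by simp
  have SS: "singular_set D u = {x \<in> interior D. gv x = 0}"
    unfolding singular_set_def using grad_eq by auto
  show ?thesis unfolding KK SS by (rule m.main_result)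
qed

end
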